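(* Suppose $(A,W)$ is a Pratt comonoid and $x_i$ $(i\in I)$ are elements of $W$ such that each $a\in A$ belongs to only finitely many of the $x_i$. Then $\bigcup_{i\in I}x_i\in W$.
   Context: A Pratt comonoid is a pair $(A,W)$ where $A$ is a set and $W$ is a set of subsets of $A$ such that (i) $\emptyset\in W$ and $A\in W$; (ii) whenever $C\subseteq A\times A$ is such that for every $a\in A$ both the $a$-th row $\{b\mid (a,b)\in C\}$ and the $a$-th column $\{b\mid (b,a)\in C\}$ belong to $W$ (a crossword over $W$), the diagonal $\{b\mid (b,b)\in C\}$ also belongs to $W$. *)

theory Defs
  imports Main
begin

definition crossword :: "'a set \<Rightarrow> 'a set set \<Rightarrow> ('a \<times> 'a) set \<Rightarrow> bool" where
  "crossword A W C \<longleftrightarrow> C \<subseteq> A \<times> A \<and>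
     (\<forall>a\<in>A. {b. (a, b) \<in> C} \<in> W \<and> {b. (b, a) \<in> C} \<in> W)"

definition pratt_comonoid :: "'a set \<Rightarrow> 'a set set \<Rightarrow> bool" where
  "pratt_comonoid A W \<longleftrightarrow> (\<forall>x\<in>W. x \<subseteq> A) \<and> {} \<in> W \<and> A \<in> W \<and>
     (\<forall>C. crossword A W C \<longrightarrow> {b. (b, b) \<in> C} \<in> W)"

end

theory Submission
  imports Defs
begin

lemma union2:
  assumes P: "pratt_comonoid A W" and u: "u \<in> W" and v: "v \<in> W"
  shows "u \<union> v \<in> W"
proof -
  have sub: "\<forall>x\<in>W. x \<subseteq> A" and AW: "A \<in> W" and cw: "\<forall>C. crossword A W C \<longrightarrow> {b. (b, b) \<in> C} \<in> W"
    using P unfolding pratt_comonoid_def by auto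
  have uA: "u \<subseteq> A" and vA: "v \<subseteq> A" using sub u v by auto
  define C where "C = (u \<times> A) \<union> (A \<times> v)"
  have "crossword A W C"
    unfolding crossword_def
  proof (intro conjI ballI)
    show "C \<subseteq> A \<times> A" using uA vA unfolding C_def by auto
  next
    fix a assume a: "a \<in> A"
    have "{b. (a, b) \<in> C} = (if a \<in> u then A else v)" using a vA unfolding C_def by auto
    then show "{b. (a, b) \<in> C} \<in> W" using AW v by simp
    have "{b. (b, a) \<in> C} = (if a \<in> v then A else u)" using a uA unfolding C_def by auto
    then show "{b. (b, a) \<in> C} \<in> W" using AW u by simp
  qed
  then have "{b. (b, b) \<in> C} \<in> W" using cw by blast
  moreover have "{b. (b, b) \<in> C} = u \<union> v" using uA vA unfolding C_def by auto
  ultimately show ?thesis by simp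
qed

lemma unionfin:
  assumes P: "pratt_comonoid A W" and F: "finite F" and x: "\<forall>i\<in>F. x i \<in> W"
  shows "(\<Union>i\<in>F. x i) \<in> W"
  using F x
proof (induction F rule: finite_induct)
  case empty then show ?case using P unfolding pratt_comonoid_def by simp
next
  case (insert i F) then show ?case using union2[OF P] by simp
qed

theorem lemma4p1:
  fixes A :: "'a set" and W :: "'a set set" and I :: "'i set" and x :: "'i \<Rightarrow> 'a set"
  assumes "pratt_comonoid A W"
    and "\<forall>i\<in>I. x i \<in> W"
    and "\<forall>a\<in>A. finite {i\<in>I. a \<in> x i}"
  shows "(\<Union>i\<in>I. x i) \<in> W"
proof -
  note P = assms(1)
  have sub: "\<forall>x\<in>W. x \<subseteq> A" and cw: "\<forall>C. crossword A W C \<longrightarrow> {b. (b, b) \<in> C} \<in> W"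
    using P unfolding pratt_comonoid_def by auto
  have xA: "\<And>i. i \<in> I \<Longrightarrow> x i \<subseteq> A" using sub assms(2) by auto
  define C where "C = {(a, b). \<exists>i\<in>I. a \<in> x i \<and> b \<in> x i}"
  have "crossword A W C"
    unfolding crossword_def
  proof (intro conjI ballI)
    show "C \<subseteq> A \<times> A" using xA unfolding C_def by blast
  next
    fix a assume a: "a \<in> A"
    have e: "{b. (a, b) \<in> C} = (\<Union>i\<in>{i\<in>I. a \<in> x i}. x i)" unfolding C_def by auto
    have "(\<Union>i\<in>{i\<in>I. a \<in> x i}. x i) \<in> W"
      using unionfin[OF P] a assms(2,3) by auto
    then show "{b. (a, b) \<in> C} \<in> W" using e by simp
    have e2: "{b. (b, a) \<in> C} = (\<Union>i\<in>{i\<in>I. a \<in> x i}. x i)" unfolding C_def by auto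
    then show "{b. (b, a) \<in> C} \<in> W" using e \<open>{b. (a, b) \<in> C} \<in> W\<close> by simp
  qed
  then have "{b. (b, b) \<in> C} \<in> W" using cw by blast
  moreover have "{b. (b, b) \<in> C} = (\<Union>i\<in>I. x i)" unfolding C_def by auto
  ultimately show ?thesis by simp
qed

end
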